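(* Tight GFG-NCWs are weak-type: every tight GFG-NCW $\mathcal{A}=\langle\Sigma,Q,Q_0,\delta,\alpha\rangle$ whose language is recognized by some GFG-NWW has an equivalent GFG-NWW on the same structure, i.e. there is $\alpha'\subseteq Q$ such that $\langle\Sigma,Q,Q_0,\delta,\alpha'\rangle$ is a weak automaton, is GFG, and recognizes $L(\mathcal{A})$.
   Context: An automaton $\langle\Sigma,Q,Q_0,\delta,\alpha\rangle$ has $\delta:Q\times\Sigma\to2^Q$; runs are accepting if the set $S$ of infinitely visited states satisfies $\alpha$: co-Büchi ($\alpha\subseteq Q$): $S\cap\alpha=\emptyset$; Büchi: $S\cap\alpha\ne\emptyset$. A Büchi automaton is weak if every strongly connected component $C$ of its state graph satisfies $C\subseteq\alpha$ or $C\cap\alpha=\emptyset$ (it may equivalently be viewed as a co-Büchi automaton with rejecting set $Q\setminus\alpha$). NCW: nondeterministic co-Büchi word automaton; NWW: nondeterministic weak word automaton. $\mathcal{A}$ is GFG if there is a strategy $g:\Sigma^*\to Q$ such that for every $w=a_1a_2\cdots$, $g(\epsilon),g(a_1),g(a_1a_2),\ldots$ is a run on $w$, accepting whenever $w\in L(\mathcal{A})$. Finite-state strategies are transducers $g=\langle\Sigma,Q,M,m_0,\rho,\tau\rangle$ (finite memories $M$, $\rho:M\times\Sigma\to M$ extended to words from $m_0$, $\tau:M\to Q$, $g(u)=\tau(\rho(u))$); $m$ is a memory of $q$ if $\tau(m)=q$. $\mathcal{A}_g=\langle\Sigma,M,m_0,\rho,\alpha_g\rangle$ with $\alpha_g=\{m\mid\tau(m)\in\alpha\}$.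 A transition $\langle q,a,q'\rangle$ is used by $g$ if $q=g(u)$, $q'=g(ua)$ for some $u$. A combination of paths from a set $P$ of finite paths is the union of the element sets of a nonempty subset of $P$. For memories $m\neq m'$ with $\tau(m)=\tau(m')$, $m$ is replaceable by $m'$ if the set of paths of $\mathcal{A}_g$ from $m'$ to $m$ is empty or all its combinations are accepting. $\mathcal{A}$ is tight if for some finite-state strategy $g$ witnessing its GFGness, every transition is used by $g$ and no memory is replaceable by a different memory of the same state. *)

theory Defs
  imports Main
begin

(* The acceptance condition is passed as a predicate on the set of infinitely visited states. *)

definition automaton :: "'a set \<Rightarrow> 'q set \<Rightarrow> 'q set \<Rightarrow> ('q \<Rightarrow> 'a \<Rightarrow> 'q set) \<Rightarrow> bool" where
  "automaton \<Sigma> Q Q0 \<delta> \<longleftrightarrow> finite \<Sigma> \<and> finite Q \<and> Q0 \<subseteq> Q \<and>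
     (\<forall>q\<in>Q. \<forall>a\<in>\<Sigma>. \<delta> q a \<subseteq> Q)"

definition inf_word :: "'a set \<Rightarrow> (nat \<Rightarrow> 'a) \<Rightarrow> bool" where
  "inf_word \<Sigma> w \<longleftrightarrow> (\<forall>i. w i \<in> \<Sigma>)"

definition is_run :: "'q set \<Rightarrow> ('q \<Rightarrow> 'a \<Rightarrow> 'q set) \<Rightarrow> (nat \<Rightarrow> 'a) \<Rightarrow> (nat \<Rightarrow> 'q) \<Rightarrow> bool" where
  "is_run Q0 \<delta> w r \<longleftrightarrow> r 0 \<in> Q0 \<and> (\<forall>i. r (Suc i) \<in> \<delta> (r i) (w i))"

definition inf_set :: "(nat \<Rightarrow> 'q) \<Rightarrow> 'q set" where
  "inf_set r = {q. \<exists>\<^sub>\<infinity> i. r i = q}"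

definition coBuchi :: "'q set \<Rightarrow> 'q set \<Rightarrow> bool" where
  "coBuchi \<alpha> S \<longleftrightarrow> S \<inter> \<alpha> = {}"

definition Buchi :: "'q set \<Rightarrow> 'q set \<Rightarrow> bool" where
  "Buchi \<alpha> S \<longleftrightarrow> S \<inter> \<alpha> \<noteq> {}"

definition lang :: "'a set \<Rightarrow> 'q set \<Rightarrow> ('q \<Rightarrow> 'a \<Rightarrow> 'q set) \<Rightarrow> ('q set \<Rightarrow> bool) \<Rightarrow> (nat \<Rightarrow> 'a) set" where
  "lang \<Sigma> Q0 \<delta> acc = {w. inf_word \<Sigma> w \<and> (\<exists>r. is_run Q0 \<delta> w r \<and> acc (inf_set r))}"

definition pref :: "(nat \<Rightarrow> 'a) \<Rightarrow> nat \<Rightarrow> 'a list" where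
  "pref w i = map w [0..<i]"

definition gfg_strategy :: "'a set \<Rightarrow> 'q set \<Rightarrow> ('q \<Rightarrow> 'a \<Rightarrow> 'q set) \<Rightarrow> ('q set \<Rightarrow> bool) \<Rightarrow> ('a list \<Rightarrow> 'q) \<Rightarrow> bool" where
  "gfg_strategy \<Sigma> Q0 \<delta> acc g \<longleftrightarrow>
     (\<forall>w. inf_word \<Sigma> w \<longrightarrow>
        is_run Q0 \<delta> w (\<lambda>i. g (pref w i)) \<and>
        (w \<in> lang \<Sigma> Q0 \<delta> acc \<longrightarrow> acc (inf_set (\<lambda>i. g (pref w i)))))"

definition GFG :: "'a set \<Rightarrow> 'q set \<Rightarrow> ('q \<Rightarrow> 'a \<Rightarrow> 'q set) \<Rightarrow> ('q set \<Rightarrow> bool) \<Rightarrow> bool" where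
  "GFG \<Sigma> Q0 \<delta> acc \<longleftrightarrow> (\<exists>g. gfg_strategy \<Sigma> Q0 \<delta> acc g)"

definition edges :: "'a set \<Rightarrow> 'q set \<Rightarrow> ('q \<Rightarrow> 'a \<Rightarrow> 'q set) \<Rightarrow> ('q \<times> 'q) set" where
  "edges \<Sigma> Q \<delta> = {(q, q'). q \<in> Q \<and> (\<exists>a\<in>\<Sigma>. q' \<in> \<delta> q a)}"

definition SCCs :: "'a set \<Rightarrow> 'q set \<Rightarrow> ('q \<Rightarrow> 'a \<Rightarrow> 'q set) \<Rightarrow> 'q set set" where
  "SCCs \<Sigma> Q \<delta> = (\<lambda>q. {q' \<in> Q. (q, q') \<in> (edges \<Sigma> Q \<delta>)\<^sup>* \<and> (q', q) \<in> (edges \<Sigma> Q \<delta>)\<^sup>*}) ` Q"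

definition weak :: "'a set \<Rightarrow> 'q set \<Rightarrow> ('q \<Rightarrow> 'a \<Rightarrow> 'q set) \<Rightarrow> 'q set \<Rightarrow> bool" where
  "weak \<Sigma> Q \<delta> \<alpha> \<longleftrightarrow> (\<forall>C \<in> SCCs \<Sigma> Q \<delta>. C \<subseteq> \<alpha> \<or> C \<inter> \<alpha> = {})"

(* Finite-state strategies: transducers with memories M (a finite set of naturals,
   w.l.o.g.), initial memory m0, update rho, output tau. *)
definition transducer :: "'a set \<Rightarrow> nat set \<Rightarrow> nat \<Rightarrow> (nat \<Rightarrow> 'a \<Rightarrow> nat) \<Rightarrow> bool" where
  "transducer \<Sigma> M m0 \<rho> \<longleftrightarrow> finite M \<and> m0 \<in> M \<and> (\<forall>m\<in>M. \<forall>a\<in>\<Sigma>. \<rho> m a \<in> M)"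

definition strat :: "nat \<Rightarrow> (nat \<Rightarrow> 'a \<Rightarrow> nat) \<Rightarrow> (nat \<Rightarrow> 'q) \<Rightarrow> 'a list \<Rightarrow> 'q" where
  "strat m0 \<rho> \<tau> u = \<tau> (fold (\<lambda>a m. \<rho> m a) u m0)"

definition used :: "'a set \<Rightarrow> ('a list \<Rightarrow> 'q) \<Rightarrow> 'q \<Rightarrow> 'a \<Rightarrow> 'q \<Rightarrow> bool" where
  "used \<Sigma> g q a q' \<longleftrightarrow> (\<exists>u \<in> lists \<Sigma>. g u = q \<and> g (u @ [a]) = q')"

definition paths_g :: "'a set \<Rightarrow> (nat \<Rightarrow> 'a \<Rightarrow> nat) \<Rightarrow> nat \<Rightarrow> nat \<Rightarrow> nat list set" where
  "paths_g \<Sigma> \<rho> m1 m2 = {p. p \<noteq> [] \<and> hd p = m1 \<and> last p = m2 \<and>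
      (\<forall>i. Suc i < length p \<longrightarrow> (\<exists>a\<in>\<Sigma>. p ! Suc i = \<rho> (p ! i) a))}"

definition combinations :: "nat list set \<Rightarrow> nat set set" where
  "combinations P = {\<Union>p\<in>P'. set p | P'. P' \<subseteq> P \<and> P' \<noteq> {}}"

definition alpha_g :: "nat set \<Rightarrow> (nat \<Rightarrow> 'q) \<Rightarrow> 'q set \<Rightarrow> nat set" where
  "alpha_g M \<tau> \<alpha> = {m \<in> M. \<tau> m \<in> \<alpha>}"

(* m replaceable by m' (A_g is a co-Buechi automaton with rejecting set alpha_g) *)
definition replaceable :: "'a set \<Rightarrow> nat set \<Rightarrow> (nat \<Rightarrow> 'a \<Rightarrow> nat) \<Rightarrow> (nat \<Rightarrow> 'q) \<Rightarrow> 'q set \<Rightarrow> nat \<Rightarrow> nat \<Rightarrow> bool" where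
  "replaceable \<Sigma> M \<rho> \<tau> \<alpha> m m' \<longleftrightarrow> m \<noteq> m' \<and> \<tau> m = \<tau> m' \<and>
     (paths_g \<Sigma> \<rho> m' m = {} \<or>
      (\<forall>S \<in> combinations (paths_g \<Sigma> \<rho> m' m). coBuchi (alpha_g M \<tau> \<alpha>) S))"

definition tight :: "'a set \<Rightarrow> 'q set \<Rightarrow> 'q set \<Rightarrow> ('q \<Rightarrow> 'a \<Rightarrow> 'q set) \<Rightarrow> 'q set \<Rightarrow> bool" where
  "tight \<Sigma> Q Q0 \<delta> \<alpha> \<longleftrightarrow> (\<exists>M m0 \<rho> \<tau>. transducer \<Sigma> M m0 \<rho> \<and>
      gfg_strategy \<Sigma> Q0 \<delta> (coBuchi \<alpha>) (strat m0 \<rho> \<tau>) \<and>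
      (\<forall>q\<in>Q. \<forall>a\<in>\<Sigma>. \<forall>q'\<in>\<delta> q a. used \<Sigma> (strat m0 \<rho> \<tau>) q a q') \<and>
      (\<forall>m\<in>M. \<forall>m'\<in>M. \<not> replaceable \<Sigma> M \<rho> \<tau> \<alpha> m m'))"

end

theory Submission imports Defs "HOL-Library.Infinite_Set"
begin

abbreviation mfold :: "('m \<Rightarrow> 'a \<Rightarrow> 'm) \<Rightarrow> 'a list \<Rightarrow> 'm \<Rightarrow> 'm" where
  "mfold \<rho> t m \<equiv> fold (\<lambda>a m. \<rho> m a) t m"

lemma inf_set_avoid: "\<forall>p\<ge>n. r p \<notin> S \<Longrightarrow> inf_set r \<inter> S = {}"
  unfolding inf_set_def by (auto simp: INFM_nat) (metis less_imp_le)

lemma inf_set_hit: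
  assumes "finite S" "\<forall>n. \<exists>p\<ge>n. r p \<in> S" shows "inf_set r \<inter> S \<noteq> {}"
proof
  assume e: "inf_set r \<inter> S = {}"
  have "\<forall>s\<in>S. finite {p. r p = s}"
    using e unfolding inf_set_def by (auto simp: INFM_iff_infinite)
  hence "finite (\<Union>s\<in>S. {p. r p = s})" using assms(1) by auto
  moreover have "(\<Union>s\<in>S. {p. r p = s}) = {p. r p \<in> S}" by auto
  ultimately have "finite {p. r p \<in> S}" by simp
  moreover have "infinite {p. r p \<in> S}"
    using assms(2) by (simp add: infinite_nat_iff_unbounded_le)
  ultimately show False by simp
qed

lemma run_in:
  assumes "automaton \<Sigma> Q Q0 \<delta>" "is_run Q0 \<delta> w r" "inf_word \<Sigma> w"
  shows "r i \<in> Q"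
  using assms unfolding automaton_def is_run_def inf_word_def
  by (induction i) blast+

lemma run_edge:
  assumes "automaton \<Sigma> Q Q0 \<delta>" "is_run Q0 \<delta> w r" "inf_word \<Sigma> w"
  shows "(r i, r (i+k)) \<in> (edges \<Sigma> Q \<delta>)\<^sup>*"
proof (induction k)
  case (Suc k)
  have "(r (i+k), r (Suc (i+k))) \<in> edges \<Sigma> Q \<delta>"
    using run_in[OF assms] assms(2,3) unfolding edges_def is_run_def inf_word_def by auto
  thus ?case using Suc by simp
qed simp

lemma path_word_aux:
  "p \<noteq> [] \<Longrightarrow> (\<forall>i. Suc i < length p \<longrightarrow> (\<exists>a\<in>\<Sigma>. p ! Suc i = \<rho> (p ! i) a))
   \<Longrightarrow> \<exists>t\<in>lists \<Sigma>. mfold \<rho> t (hd p) = last p"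
proof (induction p)
  case (Cons x p)
  show ?case
  proof (cases "p = []")
    case True thus ?thesis by (auto intro: bexI[of _ "[]"])
  next
    case False
    from Cons.prems(2)[rule_format, of 0] False obtain b where b: "b \<in> \<Sigma>" "p ! 0 = \<rho> x b" by auto
    have "\<forall>i. Suc i < length p \<longrightarrow> (\<exists>a\<in>\<Sigma>. p ! Suc i = \<rho> (p ! i) a)"
    proof (intro allI impI)
      fix i assume "Suc i < length p"
      hence "Suc (Suc i) < length (x # p)" by simp
      from Cons.prems(2)[rule_format, OF this]
      show "\<exists>a\<in>\<Sigma>. p ! Suc i = \<rho> (p ! i) a" by simp
    qed
    from Cons.IH[OF False this] obtain t where t: "t \<in> lists \<Sigma>" "mfold \<rho> t (hd p) = last p" by auto
    have "hd p = \<rho> x b" using b False by (simp add: hd_conv_nth)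
    thus ?thesis using t b False by (auto intro!: bexI[of _ "b # t"])
  qed
qed simp

lemma path_word: "p \<in> paths_g \<Sigma> \<rho> m1 m2 \<Longrightarrow> \<exists>t\<in>lists \<Sigma>. mfold \<rho> t m1 = m2"
proof -
  assume "p \<in> paths_g \<Sigma> \<rho> m1 m2"
  hence p: "p \<noteq> []" "hd p = m1" "last p = m2"
    "\<forall>i. Suc i < length p \<longrightarrow> (\<exists>a\<in>\<Sigma>. p ! Suc i = \<rho> (p ! i) a)"
    unfolding paths_g_def by auto
  show ?thesis using path_word_aux[OF p(1,4)] p(2,3) by simp
qed

lemma mfold_in: "transducer \<Sigma> M m0 \<rho> \<Longrightarrow> m \<in> M \<Longrightarrow> t \<in> lists \<Sigma> \<Longrightarrow> mfold \<rho> t m \<in> M"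
  unfolding transducer_def by (induction t arbitrary: m) auto

lemma L2:
  assumes nr: "\<forall>m\<in>M. \<forall>m'\<in>M. \<not> replaceable \<Sigma> M \<rho> \<tau> \<alpha> m m'"
    and "m1 \<in> M" "m2 \<in> M" "\<tau> m1 = \<tau> m2"
  shows "\<exists>t\<in>lists \<Sigma>. mfold \<rho> t m1 = m2"
proof (cases "m1 = m2")
  case True thus ?thesis by (auto intro: bexI[of _ "[]"])
next
  case False
  have "\<not> replaceable \<Sigma> M \<rho> \<tau> \<alpha> m2 m1" using nr assms(2,3) by blast
  hence "paths_g \<Sigma> \<rho> m1 m2 \<noteq> {}" using False assms(4) unfolding replaceable_def by auto
  thus ?thesis using path_word by blast
qed

lemma L1:
  assumes tr: "transducer \<Sigma> M m0 \<rho>"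
    and nr: "\<forall>m\<in>M. \<forall>m'\<in>M. \<not> replaceable \<Sigma> M \<rho> \<tau> \<alpha> m m'"
    and us: "\<forall>q\<in>Q. \<forall>a\<in>\<Sigma>. \<forall>q'\<in>\<delta> q a. used \<Sigma> (strat m0 \<rho> \<tau>) q a q'"
    and e: "(q1, q2) \<in> (edges \<Sigma> Q \<delta>)\<^sup>*" and m1: "m1 \<in> M" "\<tau> m1 = q1"
  shows "\<exists>t\<in>lists \<Sigma>. \<tau> (mfold \<rho> t m1) = q2"
  using e
proof (induction rule: rtrancl_induct)
  case base thus ?case using m1 by (auto intro: bexI[of _ "[]"])
next
  case (step q2 q3)
  then obtain t where t: "t \<in> lists \<Sigma>" "\<tau> (mfold \<rho> t m1) = q2" by auto
  from step(2) obtain a where a: "q2 \<in> Q" "a \<in> \<Sigma>" "q3 \<in> \<delta> q2 a" unfolding edges_def by auto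
  from us a obtain u where u: "u \<in> lists \<Sigma>" "strat m0 \<rho> \<tau> u = q2" "strat m0 \<rho> \<tau> (u @ [a]) = q3"
    unfolding used_def by blast
  define mu where "mu = mfold \<rho> u m0"
  have m0M: "m0 \<in> M" using tr unfolding transducer_def by simp
  have mu: "mu \<in> M" unfolding mu_def using mfold_in[OF tr m0M u(1)] .
  have m2: "mfold \<rho> t m1 \<in> M" using mfold_in[OF tr m1(1) t(1)] .
  have "\<tau> mu = q2" using u(2) unfolding mu_def strat_def by simp
  with L2[OF nr m2 mu] t obtain t' where t': "t' \<in> lists \<Sigma>" "mfold \<rho> t' (mfold \<rho> t m1) = mu" by auto
  have "\<tau> (mfold \<rho> (t @ t' @ [a]) m1) = q3"
    using t' u(3) unfolding mu_def strat_def by simp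
  thus ?case using t t' a by (intro bexI[of _ "t @ t' @ [a]"]) auto
qed


lemma pref_split: "a \<le> b \<Longrightarrow> pref w b = pref w a @ map w [a..<b]"
  unfolding pref_def by (metis le_Suc_ex map_append upt_add_eq_append zero_le)

lemma pref_len[simp]: "length (pref w n) = n" unfolding pref_def by simp

lemma pref_lists: "inf_word \<Sigma> w \<Longrightarrow> pref w n \<in> lists \<Sigma>"
  unfolding pref_def inf_word_def by auto

lemma contra:
  fixes gB :: "'a list \<Rightarrow> 'p" and \<tau> :: "'m \<Rightarrow> 'q"
  assumes gA: "gfg_strategy \<Sigma> Q0 \<delta> (coBuchi \<alpha>) (\<lambda>u. \<tau> (mfold \<rho> u m0))"
    and fa: "finite \<alpha>" and gB: "gfg_strategy \<Sigma> P0 \<delta>B (Buchi \<beta>) gB" and fb: "finite \<beta>"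
    and L: "lang \<Sigma> P0 \<delta>B (Buchi \<beta>) = lang \<Sigma> Q0 \<delta> (coBuchi \<alpha>)"
    and w: "inf_word \<Sigma> w"
    and avoid: "\<forall>n\<ge>i0. \<tau> (mfold \<rho> (pref w n) m0) \<notin> \<alpha>"
    and mi0: "mfold \<rho> (pref w i0) m0 = m"
    and inf: "\<forall>n. \<exists>j>n. mfold \<rho> (pref w j) m0 = m"
    and y: "t1 \<in> lists \<Sigma>" "t2 \<in> lists \<Sigma>" "\<tau> (mfold \<rho> t1 m) \<in> \<alpha>" "mfold \<rho> (t1@t2) m = m"
  shows False
proof -
  define mr where "mr n = mfold \<rho> (pref w n) m0" for n
  have mr_seg: "mfold \<rho> (map w [i0..<j]) m = mr j" if "i0 \<le> j" for j
    using pref_split[OF that, of w] mi0 unfolding mr_def by simp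
  define Good where "Good zz p \<longleftrightarrow> i0 \<le> fst p \<and> fst p < snd p \<and> mr (snd p) = m \<and>
      gB (zz @ map w [i0..<fst p]) \<in> \<beta>" for zz p
  have hit: "\<exists>p. Good zz p" if zz: "zz \<in> lists \<Sigma>" "mfold \<rho> zz m0 = m" for zz
  proof -
    define v where "v p = (if p < length zz then zz ! p else w (i0 + (p - length zz)))" for p
    have v: "inf_word \<Sigma> v" using zz(1) w unfolding v_def inf_word_def by auto
    have pv: "pref v (length zz + k) = zz @ map w [i0..<i0+k]" for k
      by (rule nth_equalityI) (auto simp: pref_def v_def nth_append)
    have pv': "pref v p = zz @ map w [i0..<i0 + (p - length zz)]" if "p \<ge> length zz" for p
      using pv[of "p - length zz"] that by simp
    have "\<forall>p\<ge>length zz. \<tau> (mfold \<rho> (pref v p) m0) \<notin> \<alpha>"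
    proof (intro allI impI)
      fix p assume p: "p \<ge> length zz"
      have "mfold \<rho> (pref v p) m0 = mr (i0 + (p - length zz))"
        using pv'[OF p] zz(2) mr_seg[of "i0 + (p - length zz)"] by simp
      thus "\<tau> (mfold \<rho> (pref v p) m0) \<notin> \<alpha>" using avoid unfolding mr_def by simp
    qed
    hence "coBuchi \<alpha> (inf_set (\<lambda>i. \<tau> (mfold \<rho> (pref v i) m0)))"
      unfolding coBuchi_def by (rule inf_set_avoid)
    moreover have "is_run Q0 \<delta> v (\<lambda>i. \<tau> (mfold \<rho> (pref v i) m0))"
      using gA v unfolding gfg_strategy_def by blast
    ultimately have "v \<in> lang \<Sigma> Q0 \<delta> (coBuchi \<alpha>)" using v unfolding lang_def by blast
    hence "v \<in> lang \<Sigma> P0 \<delta>B (Buchi \<beta>)" using L by simp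
    hence "Buchi \<beta> (inf_set (\<lambda>i. gB (pref v i)))" using gB v unfolding gfg_strategy_def by blast
    then obtain q where q: "q \<in> \<beta>" "\<exists>\<^sub>\<infinity>i. gB (pref v i) = q"
      unfolding Buchi_def inf_set_def by auto
    then obtain p where p: "p > length zz" "gB (pref v p) = q" by (auto simp: INFM_nat)
    define j where "j = i0 + (p - length zz)"
    obtain J where J: "J > j" "mr J = m" using inf unfolding mr_def by blast
    have "gB (zz @ map w [i0..<j]) \<in> \<beta>" using pv'[of p] p q unfolding j_def by simp
    hence "Good zz (j, J)" unfolding Good_def using J j_def by simp
    thus ?thesis by blast
  qed
  define sel where "sel zz = (SOME p. Good zz p)" for zz
  define nxt where "nxt zz = zz @ map w [i0..<snd (sel zz)] @ t1 @ t2" for zz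
  define z where "z n = (nxt ^^ n) (pref w i0)" for n
  define Inv where "Inv zz \<longleftrightarrow> zz \<in> lists \<Sigma> \<and> mfold \<rho> zz m0 = m" for zz
  have step: "Good zz (sel zz) \<and> Inv (nxt zz)" if "Inv zz" for zz
  proof -
    have g: "Good zz (sel zz)" using hit[of zz] that unfolding Inv_def sel_def by (metis someI_ex)
    hence "mfold \<rho> (map w [i0..<snd (sel zz)]) m = m"
      using mr_seg unfolding Good_def by simp
    hence "mfold \<rho> (nxt zz) m0 = m" using that y(4) unfolding Inv_def nxt_def by simp
    moreover have "nxt zz \<in> lists \<Sigma>" using that y(1,2) w unfolding Inv_def nxt_def inf_word_def by auto
    ultimately show ?thesis using g unfolding Inv_def by simp
  qed
  have inv: "Inv (z n)" for n
  proof (induction n)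
    case 0 thus ?case using pref_lists[OF w] mi0 unfolding z_def Inv_def by simp
  next
    case (Suc n) thus ?case using step[of "z n"] unfolding z_def by simp
  qed
  have zS: "z (Suc n) = nxt (z n)" for n unfolding z_def by simp
  have good: "Good (z n) (sel (z n))" for n using step inv by blast
  have lenS: "length (z (Suc n)) > length (z n)" for n
    using good[of n] unfolding zS nxt_def Good_def by auto
  have len: "length (z n) \<ge> n" for n
  proof (induction n)
    case (Suc n) thus ?case using lenS[of n] by linarith
  qed simp
  have pre: "\<exists>s. z n = z k @ s" if "k \<le> n" for k n
    using that
  proof (induction n rule: dec_induct)
    case (step n) thus ?case unfolding zS nxt_def by auto
  qed simp
  define ws where "ws p = z (Suc p) ! p" for p
  have ws_nth: "ws p = z n ! p" if "p < length (z n)" for p n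
  proof -
    have a: "p < length (z (Suc p))" using len[of "Suc p"] by simp
    show ?thesis
    proof (cases "Suc p \<le> n")
      case True then obtain s where "z n = z (Suc p) @ s" using pre by blast
      thus ?thesis using a unfolding ws_def by (simp add: nth_append)
    next
      case False then obtain s where "z (Suc p) = z n @ s" using pre by (meson nat_le_linear)
      thus ?thesis using that unfolding ws_def by (simp add: nth_append)
    qed
  qed
  have ws_pref: "pref ws l = take l (z n)" if "l \<le> length (z n)" for l n
    by (rule nth_equalityI) (use that in \<open>auto simp: pref_def ws_nth\<close>)
  have wsw: "inf_word \<Sigma> ws"
    unfolding inf_word_def
  proof
    fix p
    have "p < length (z (Suc p))" using len[of "Suc p"] by simp
    hence "ws p \<in> set (z (Suc p))" unfolding ws_def by simp
    thus "ws p \<in> \<Sigma>" using inv[of "Suc p"] unfolding Inv_def by auto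
  qed
  have ahit: "\<forall>n. \<exists>p\<ge>n. \<tau> (mfold \<rho> (pref ws p) m0) \<in> \<alpha>"
  proof
    fix n
    let ?J = "snd (sel (z n))"
    define p where "p = length (z n) + (?J - i0) + length t1"
    have Jg: "i0 \<le> ?J" using good[of n] unfolding Good_def by simp
    have "p \<le> length (z (Suc n))" unfolding p_def zS nxt_def by simp
    hence "pref ws p = take p (z (Suc n))" by (rule ws_pref)
    also have "\<dots> = z n @ map w [i0..<?J] @ t1" unfolding p_def zS nxt_def by simp
    finally have "mfold \<rho> (pref ws p) m0 = mfold \<rho> t1 m"
      using inv[of n] mr_seg[OF Jg] good[of n] unfolding Inv_def Good_def by simp
    moreover have "p \<ge> n" using len[of n] unfolding p_def by simp
    ultimately show "\<exists>p\<ge>n. \<tau> (mfold \<rho> (pref ws p) m0) \<in> \<alpha>" using y(3) by auto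
  qed
  have bhit: "\<forall>n. \<exists>p\<ge>n. gB (pref ws p) \<in> \<beta>"
  proof
    fix n
    let ?J = "snd (sel (z n))" and ?j = "fst (sel (z n))"
    define p where "p = length (z n) + (?j - i0)"
    have Jg: "i0 \<le> ?j" "?j < ?J" using good[of n] unfolding Good_def by auto
    have "p \<le> length (z (Suc n))" using Jg unfolding p_def zS nxt_def by simp
    hence "pref ws p = take p (z (Suc n))" by (rule ws_pref)
    also have "\<dots> = z n @ map w [i0..<?j]" using Jg unfolding p_def zS nxt_def by (simp add: take_map)
    finally have "gB (pref ws p) \<in> \<beta>" using good[of n] unfolding Good_def by simp
    moreover have "p \<ge> n" using len[of n] unfolding p_def by simp
    ultimately show "\<exists>p\<ge>n. gB (pref ws p) \<in> \<beta>" by auto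
  qed
  have "Buchi \<beta> (inf_set (\<lambda>i. gB (pref ws i)))"
    unfolding Buchi_def by (rule inf_set_hit[OF fb bhit])
  moreover have "is_run P0 \<delta>B ws (\<lambda>i. gB (pref ws i))" using gB wsw unfolding gfg_strategy_def by blast
  ultimately have "ws \<in> lang \<Sigma> P0 \<delta>B (Buchi \<beta>)" using wsw unfolding lang_def by blast
  hence "ws \<in> lang \<Sigma> Q0 \<delta> (coBuchi \<alpha>)" using L by simp
  hence "coBuchi \<alpha> (inf_set (\<lambda>i. \<tau> (mfold \<rho> (pref ws i) m0)))" using gA wsw unfolding gfg_strategy_def by blast
  thus False using inf_set_hit[OF fa ahit] unfolding coBuchi_def by simp
qed


theorem theorem18:
  fixes \<Sigma> :: "'a set" and Q Q0 :: "'q set" and \<delta> :: "'q \<Rightarrow> 'a \<Rightarrow> 'q set" and \<alpha> :: "'q set"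
    and P P0 :: "'p set" and \<delta>B :: "'p \<Rightarrow> 'a \<Rightarrow> 'p set" and \<beta> :: "'p set"
  assumes A: "automaton \<Sigma> Q Q0 \<delta>" and \<alpha>Q: "\<alpha> \<subseteq> Q"
    and A_gfg: "GFG \<Sigma> Q0 \<delta> (coBuchi \<alpha>)"
    and A_tight: "tight \<Sigma> Q Q0 \<delta> \<alpha>"
    and B: "automaton \<Sigma> P P0 \<delta>B" and \<beta>P: "\<beta> \<subseteq> P"
    and B_weak: "weak \<Sigma> P \<delta>B \<beta>"
    and B_gfg: "GFG \<Sigma> P0 \<delta>B (Buchi \<beta>)"
    and B_lang: "lang \<Sigma> P0 \<delta>B (Buchi \<beta>) = lang \<Sigma> Q0 \<delta> (coBuchi \<alpha>)"
  shows "\<exists>\<alpha>' \<subseteq> Q. weak \<Sigma> Q \<delta> \<alpha>' \<and> GFG \<Sigma> Q0 \<delta> (Buchi \<alpha>') \<and>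
           lang \<Sigma> Q0 \<delta> (Buchi \<alpha>') = lang \<Sigma> Q0 \<delta> (coBuchi \<alpha>)"
proof -
  obtain M m0 \<rho> \<tau> where tr: "transducer \<Sigma> M m0 \<rho>"
    and gA: "gfg_strategy \<Sigma> Q0 \<delta> (coBuchi \<alpha>) (strat m0 \<rho> \<tau>)"
    and us: "\<forall>q\<in>Q. \<forall>a\<in>\<Sigma>. \<forall>q'\<in>\<delta> q a. used \<Sigma> (strat m0 \<rho> \<tau>) q a q'"
    and nr: "\<forall>m\<in>M. \<forall>m'\<in>M. \<not> replaceable \<Sigma> M \<rho> \<tau> \<alpha> m m'"
    using A_tight unfolding tight_def by blast
  obtain gB where gB: "gfg_strategy \<Sigma> P0 \<delta>B (Buchi \<beta>) gB" using B_gfg unfolding GFG_def by blast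
  have fQ: "finite Q" using A unfolding automaton_def by simp
  have fa: "finite \<alpha>" using \<alpha>Q fQ finite_subset by blast
  have fb: "finite \<beta>" using \<beta>P B finite_subset unfolding automaton_def by blast
  have sg: "strat m0 \<rho> \<tau> = (\<lambda>u. \<tau> (mfold \<rho> u m0))" unfolding strat_def by (rule ext) simp
  define E where "E = edges \<Sigma> Q \<delta>"
  define \<alpha>' where "\<alpha>' = {q\<in>Q. \<forall>q'. (q,q') \<in> E\<^sup>* \<and> (q',q) \<in> E\<^sup>* \<longrightarrow> q' \<notin> \<alpha>}"
  have sub: "\<alpha>' \<subseteq> Q" unfolding \<alpha>'_def by auto
  have weak: "weak \<Sigma> Q \<delta> \<alpha>'"
    unfolding weak_def SCCs_def
  proof (intro ballI)
    fix C assume "C \<in> (\<lambda>q. {q' \<in> Q. (q, q') \<in> (edges \<Sigma> Q \<delta>)\<^sup>* \<and> (q', q) \<in> (edges \<Sigma> Q \<delta>)\<^sup>*}) ` Q"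
    then obtain q0 where C: "C = {q' \<in> Q. (q0, q') \<in> E\<^sup>* \<and> (q', q0) \<in> E\<^sup>*}" unfolding E_def by auto
    show "C \<subseteq> \<alpha>' \<or> C \<inter> \<alpha>' = {}"
    proof (cases "C \<inter> \<alpha>' = {}")
      case False
      then obtain q1 where q1: "q1 \<in> C" "q1 \<in> \<alpha>'" by auto
      have q1C: "(q0,q1) \<in> E\<^sup>*" "(q1,q0) \<in> E\<^sup>*" "q1 \<in> Q" using q1(1) C by auto
      have "C \<subseteq> \<alpha>'"
      proof
        fix q2 assume q2: "q2 \<in> C"
        have q2C: "(q0,q2) \<in> E\<^sup>*" "(q2,q0) \<in> E\<^sup>*" "q2 \<in> Q" using q2 C by auto
        have e12: "(q1,q2) \<in> E\<^sup>*" using rtrancl_trans[OF q1C(2) q2C(1)] .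
        have e21: "(q2,q1) \<in> E\<^sup>*" using rtrancl_trans[OF q2C(2) q1C(1)] .
        have "q' \<notin> \<alpha>" if "(q2,q') \<in> E\<^sup>*" "(q',q2) \<in> E\<^sup>*" for q'
        proof -
          have "(q1,q') \<in> E\<^sup>*" using rtrancl_trans[OF e12 that(1)] .
          moreover have "(q',q1) \<in> E\<^sup>*" using rtrancl_trans[OF that(2) e21] .
          ultimately show ?thesis using q1(2) unfolding \<alpha>'_def by blast
        qed
        thus "q2 \<in> \<alpha>'" using q2C(3) unfolding \<alpha>'_def by blast
      qed
      thus ?thesis by simp
    qed simp
  qed
  have lsub: "lang \<Sigma> Q0 \<delta> (Buchi \<alpha>') \<subseteq> lang \<Sigma> Q0 \<delta> (coBuchi \<alpha>)"
  proof
    fix w assume "w \<in> lang \<Sigma> Q0 \<delta> (Buchi \<alpha>')"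
    then obtain r where w: "inf_word \<Sigma> w" and r: "is_run Q0 \<delta> w r" and acc: "Buchi \<alpha>' (inf_set r)"
      unfolding lang_def by blast
    obtain q where q: "q \<in> inf_set r" "q \<in> \<alpha>'" using acc unfolding Buchi_def by auto
    have "inf_set r \<inter> \<alpha> = {}"
    proof (rule ccontr)
      assume "inf_set r \<inter> \<alpha> \<noteq> {}"
      then obtain q' where q': "q' \<in> inf_set r" "q' \<in> \<alpha>" by auto
      obtain i where i: "r i = q" using q(1) unfolding inf_set_def by (auto simp: INFM_nat)
      obtain j where j: "j > i" "r j = q'" using q'(1) unfolding inf_set_def by (auto simp: INFM_nat)
      obtain k where k: "k > j" "r k = q" using q(1) unfolding inf_set_def by (auto simp: INFM_nat)
      have "(r i, r (i + (j - i))) \<in> E\<^sup>*" "(r j, r (j + (k - j))) \<in> E\<^sup>*"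
        using run_edge[OF A r w, of i "j - i"] run_edge[OF A r w, of j "k - j"] unfolding E_def by simp_all
      hence "(q, q') \<in> E\<^sup>*" "(q', q) \<in> E\<^sup>*" using i j k by simp_all
      thus False using q(2) q'(2) unfolding \<alpha>'_def by auto
    qed
    thus "w \<in> lang \<Sigma> Q0 \<delta> (coBuchi \<alpha>)" using w r unfolding lang_def coBuchi_def by blast
  qed
  have key: "Buchi \<alpha>' (inf_set (\<lambda>i. strat m0 \<rho> \<tau> (pref w i)))"
    if w: "inf_word \<Sigma> w" and wL: "w \<in> lang \<Sigma> Q0 \<delta> (coBuchi \<alpha>)" for w
  proof (rule ccontr)
    assume nb: "\<not> Buchi \<alpha>' (inf_set (\<lambda>i. strat m0 \<rho> \<tau> (pref w i)))"
    define mr where "mr n = mfold \<rho> (pref w n) m0" for n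
    define r where "r i = strat m0 \<rho> \<tau> (pref w i)" for i
    have r_mr: "r i = \<tau> (mr i)" for i unfolding r_def mr_def strat_def by simp
    have mrM: "mr n \<in> M" for n
    proof -
      have m0M: "m0 \<in> M" using tr unfolding transducer_def by simp
      show ?thesis unfolding mr_def using mfold_in[OF tr m0M pref_lists[OF w]] .
    qed
    have run: "is_run Q0 \<delta> w r" using gA w unfolding gfg_strategy_def r_def by blast
    have rQ: "r i \<in> Q" for i using run_in[OF A run w] .
    have "\<forall>n. \<exists>p\<ge>n. r p \<in> Q" using rQ by blast
    hence "inf_set r \<inter> Q \<noteq> {}" by (rule inf_set_hit[OF fQ])
    then obtain q where q: "q \<in> inf_set r" "q \<in> Q" by auto
    have "q \<notin> \<alpha>'" using nb q unfolding Buchi_def r_def by auto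
    then obtain q' where q': "(q,q') \<in> E\<^sup>*" "(q',q) \<in> E\<^sup>*" "q' \<in> \<alpha>" using q(2) unfolding \<alpha>'_def by auto
    have "coBuchi \<alpha> (inf_set r)" using gA w wL unfolding gfg_strategy_def r_def by blast
    hence cb: "inf_set r \<inter> \<alpha> = {}" unfolding coBuchi_def .
    obtain N where N: "\<forall>n\<ge>N. r n \<notin> \<alpha>"
    proof (rule ccontr)
      assume "\<not> thesis"
      hence "\<forall>N. \<exists>n\<ge>N. r n \<in> \<alpha>" using that by blast
      from inf_set_hit[OF fa this] cb show False by simp
    qed
    define S where "S = {m\<in>M. \<tau> m = q}"
    have fS: "finite S" using tr unfolding S_def transducer_def by simp
    have "\<forall>n. \<exists>p\<ge>n. mr p \<in> S"
    proof
      fix n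
      obtain p where "p > n" "r p = q" using q(1) unfolding inf_set_def by (auto simp: INFM_nat)
      hence "p \<ge> n" "mr p \<in> S" using mrM[of p] r_mr[of p] unfolding S_def by auto
      thus "\<exists>p\<ge>n. mr p \<in> S" by blast
    qed
    from inf_set_hit[OF fS this] obtain m where m: "m \<in> S" "\<exists>\<^sub>\<infinity>n. mr n = m"
      unfolding inf_set_def by auto
    have minf: "\<forall>n. \<exists>j>n. mr j = m" using m(2) by (simp add: INFM_nat)
    then obtain i0 where i0: "i0 > N" "mr i0 = m" by blast
    have mM: "m \<in> M" "\<tau> m = q" using m(1) unfolding S_def by auto
    have "\<exists>t\<in>lists \<Sigma>. \<tau> (mfold \<rho> t m) = q'"
      by (rule L1[OF tr nr us q'(1)[unfolded E_def] mM])
    then obtain t1 where t1: "t1 \<in> lists \<Sigma>" "\<tau> (mfold \<rho> t1 m) = q'" by (elim bexE) simp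
    define ma where "ma = mfold \<rho> t1 m"
    have maM: "ma \<in> M" unfolding ma_def using mfold_in[OF tr mM(1) t1(1)] .
    have "\<tau> ma = q'" using t1(2) unfolding ma_def .
    have "\<exists>t\<in>lists \<Sigma>. \<tau> (mfold \<rho> t ma) = q"
      by (rule L1[OF tr nr us q'(2)[unfolded E_def] maM \<open>\<tau> ma = q'\<close>])
    then obtain t2a where t2a: "t2a \<in> lists \<Sigma>" "\<tau> (mfold \<rho> t2a ma) = q" by (elim bexE) simp
    have m3M: "mfold \<rho> t2a ma \<in> M" using mfold_in[OF tr maM t2a(1)] .
    have "\<tau> (mfold \<rho> t2a ma) = \<tau> m" using t2a(2) mM(2) by simp
    from L2[OF nr m3M mM(1) this]
    obtain t2b where t2b: "t2b \<in> lists \<Sigma>" "mfold \<rho> t2b (mfold \<rho> t2a ma) = m" by (elim bexE) simp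
    have h1: "gfg_strategy \<Sigma> Q0 \<delta> (coBuchi \<alpha>) (\<lambda>u. \<tau> (mfold \<rho> u m0))" using gA sg by simp
    have h2: "\<forall>n\<ge>i0. \<tau> (mfold \<rho> (pref w n) m0) \<notin> \<alpha>" using N i0(1) r_mr unfolding mr_def by auto
    have h3: "mfold \<rho> (pref w i0) m0 = m" using i0(2) unfolding mr_def by simp
    have h4: "\<forall>n. \<exists>j>n. mfold \<rho> (pref w j) m0 = m" using minf unfolding mr_def by simp
    have h5: "mfold \<rho> (t1 @ t2a @ t2b) m = m" using t2b unfolding ma_def by simp
    have h6: "t2a @ t2b \<in> lists \<Sigma>" using t2a(1) t2b(1) by simp
    have h7: "\<tau> (mfold \<rho> t1 m) \<in> \<alpha>" using t1(2) q'(3) by simp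
    show False by (rule contra[OF h1 fa gB fb B_lang w h2 h3 h4 t1(1) h6 h7 h5])
  qed
  have gfg': "gfg_strategy \<Sigma> Q0 \<delta> (Buchi \<alpha>') (strat m0 \<rho> \<tau>)"
    unfolding gfg_strategy_def
  proof (intro allI impI conjI)
    fix w assume w: "inf_word \<Sigma> w"
    show "is_run Q0 \<delta> w (\<lambda>i. strat m0 \<rho> \<tau> (pref w i))" using gA w unfolding gfg_strategy_def by blast
    assume "w \<in> lang \<Sigma> Q0 \<delta> (Buchi \<alpha>')"
    thus "Buchi \<alpha>' (inf_set (\<lambda>i. strat m0 \<rho> \<tau> (pref w i)))" using key w lsub by blast
  qed
  have "lang \<Sigma> Q0 \<delta> (coBuchi \<alpha>) \<subseteq> lang \<Sigma> Q0 \<delta> (Buchi \<alpha>')"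
  proof
    fix w assume wL: "w \<in> lang \<Sigma> Q0 \<delta> (coBuchi \<alpha>)"
    hence w: "inf_word \<Sigma> w" unfolding lang_def by blast
    have "is_run Q0 \<delta> w (\<lambda>i. strat m0 \<rho> \<tau> (pref w i))" using gA w unfolding gfg_strategy_def by blast
    thus "w \<in> lang \<Sigma> Q0 \<delta> (Buchi \<alpha>')" using key[OF w wL] w unfolding lang_def by blast
  qed
  hence "lang \<Sigma> Q0 \<delta> (Buchi \<alpha>') = lang \<Sigma> Q0 \<delta> (coBuchi \<alpha>)" using lsub by blast
  thus ?thesis using sub weak gfg' unfolding GFG_def by blast
qed

end
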